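(* Let $g\ge2$, $n\ge1$ and $d\in\mathbb Z$. For $j=2,\dots,n$ let $T_j$ and let $S$ be the operators on degree $d$ universal stability conditions of type $(g,n)$ given by $T_j(\mathfrak m)_{(e,h,A)}=\mathfrak m_{(e,h,A)}+1$ if $1\in A,j\notin A$; $=\mathfrak m_{(e,h,A)}-1$ if $1\notin A, j\in A$; $=\mathfrak m_{(e,h,A)}$ otherwise; and $S(\mathfrak m)_{(e,h,A)}=\mathfrak m_{(e,h,A)}+2g-2h-e$ if $1\in A$, $=\mathfrak m_{(e,h,A)}-(2h+e-2)$ if $1\notin A$. These operators (which correspond to tensoring the associated Jacobian with $\mathcal O(\Sigma_1-\Sigma_j)$ and $\mathcal O((2g-2)\Sigma_1)\otimes\omega_\pi^{-1}$ respectively) generate a group action on the set of degree $d$ universal stability conditions of type $(g,n)$, and every orbit of this action contains exactly one $\mathfrak m$ satisfying $\mathfrak m_{(2,0,\{1\})}\in\{0,1,\dots,2g-3\}$ and $\mathfrak m_{(2,0,\{i\})}=0$ for all $i\in\{2,\dots,n\}$.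
   Context: Fix $g\ge2$, $n\ge1$, $[n]=\{1,\dots,n\}$. The vine graph $V(e,h,A)$ has two vertices $v_1,v_2$ joined by $e$ edges, no loops, with vertex genera $g(v_1)=h$, $g(v_2)=g+1-e-h$ and markings $A$ at $v_1$, $[n]\setminus A$ at $v_2$; it is stable if $2h-2+e+|A|>0$ and $2(g+1-e-h)-2+e+n-|A|>0$. $\mathcal D_{g,n}$ is the set of triples $(e,h,A)$ with $e\ge1$, $h\ge0$, $g+1-e-h\ge0$, $A\subseteq[n]$ and $V(e,h,A)$ stable. A degree $d$ universal stability condition of type $(g,n)$ is a family of integers $(\mathfrak m_{(e,h,A)})_{(e,h,A)\in\mathcal D_{g,n}}$ such that (i) $\mathfrak m_{(e,h,A)}+\mathfrak m_{(e,g+1-e-h,[n]\setminus A)}=d+1-e$ for all $(e,h,A)$, and (ii) $0\le \mathfrak m_{(e,h,A)}-h-(\mathfrak m_{(e',h',A')}-h')-(\mathfrak m_{(e'',h'',A'')}-h'')\le1$ whenever $A=A'\sqcup A''$, $2(h+1-h'-h'')=e'+e''-e$, and $e<e'+e''$, $e'<e+e''$, $e''<e+e'$. *)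

theory Defs
  imports Main
begin

type_synonym vine = "nat \<times> nat \<times> nat set"

text \<open>The index set D_{g,n}: triples (e,h,A) with e \<ge> 1, h \<ge> 0, g+1-e-h \<ge> 0,
  A \<subseteq> [n], and V(e,h,A) stable.\<close>
definition Dgn :: "nat \<Rightarrow> nat \<Rightarrow> vine set" where
  "Dgn g n = {(e,h,A). 1 \<le> e \<and> e + h \<le> g + 1 \<and> A \<subseteq> {1..n} \<and>
      2 * int h - 2 + int e + int (card A) > 0 \<and>
      2 * (int g + 1 - int e - int h) - 2 + int e + int n - int (card A) > 0}"

text \<open>Degree d universal stability conditions of type (g,n); a condition is an
  integer family indexed by D_{g,n}, represented as a function that vanishes off D_{g,n}.\<close>
definition USC :: "nat \<Rightarrow> nat \<Rightarrow> int \<Rightarrow> (vine \<Rightarrow> int) set" where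
  "USC g n d = {m.
     (\<forall>x. x \<notin> Dgn g n \<longrightarrow> m x = 0) \<and>
     (\<forall>e h A. (e,h,A) \<in> Dgn g n \<longrightarrow>
        m (e,h,A) + m (e, g + 1 - e - h, {1..n} - A) = d + 1 - int e) \<and>
     (\<forall>e h A e' h' A' e'' h'' A''.
        (e,h,A) \<in> Dgn g n \<and> (e',h',A') \<in> Dgn g n \<and> (e'',h'',A'') \<in> Dgn g n \<and>
        A = A' \<union> A'' \<and> A' \<inter> A'' = {} \<and>
        2 * (int h + 1 - int h' - int h'') = int e' + int e'' - int e \<and>
        e < e' + e'' \<and> e' < e + e'' \<and> e'' < e + e' \<longrightarrow>
        0 \<le> (m (e,h,A) - int h) - (m (e',h',A') - int h') - (m (e'',h'',A'') - int h'') \<and>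
        (m (e,h,A) - int h) - (m (e',h',A') - int h') - (m (e'',h'',A'') - int h'') \<le> 1)}"

definition Top :: "nat \<Rightarrow> nat \<Rightarrow> nat \<Rightarrow> (vine \<Rightarrow> int) \<Rightarrow> (vine \<Rightarrow> int)" where
  "Top g n j m = (\<lambda>(e,h,A). if (e,h,A) \<in> Dgn g n then
       (if 1 \<in> A \<and> j \<notin> A then m (e,h,A) + 1
        else if 1 \<notin> A \<and> j \<in> A then m (e,h,A) - 1
        else m (e,h,A))
     else 0)"

definition Sop :: "nat \<Rightarrow> nat \<Rightarrow> (vine \<Rightarrow> int) \<Rightarrow> (vine \<Rightarrow> int)" where
  "Sop g n m = (\<lambda>(e,h,A). if (e,h,A) \<in> Dgn g n then
       (if 1 \<in> A then m (e,h,A) + 2 * int g - 2 * int h - int e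
        else m (e,h,A) - (2 * int h + int e - 2))
     else 0)"

definition gens :: "nat \<Rightarrow> nat \<Rightarrow> ((vine \<Rightarrow> int) \<Rightarrow> (vine \<Rightarrow> int)) set" where
  "gens g n = insert (Sop g n) {Top g n j | j. j \<in> {2..n}}"

inductive_set orbit :: "nat \<Rightarrow> nat \<Rightarrow> int \<Rightarrow> (vine \<Rightarrow> int) \<Rightarrow> (vine \<Rightarrow> int) set"
  for g n d m where
  base: "m \<in> orbit g n d m"
| fwd: "x \<in> orbit g n d m \<Longrightarrow> f \<in> gens g n \<Longrightarrow> f x \<in> orbit g n d m"
| bwd: "x \<in> orbit g n d m \<Longrightarrow> f \<in> gens g n \<Longrightarrow> inv_into (USC g n d) f x \<in> orbit g n d m"

definition normalized :: "nat \<Rightarrow> nat \<Rightarrow> (vine \<Rightarrow> int) \<Rightarrow> bool" where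
  "normalized g n m \<longleftrightarrow> m (2, 0, {1}) \<in> {0 .. 2 * int g - 3} \<and>
     (\<forall>i \<in> {2..n}. m (2, 0, {i}) = 0)"

end

theory Submission
  imports Defs
begin

definition tj :: "nat \<Rightarrow> vine \<Rightarrow> int" where
  "tj j = (\<lambda>(e,h,A). (if 1 \<in> A then 1 else 0) - (if j \<in> A then 1 else 0))"

definition sv :: "nat \<Rightarrow> vine \<Rightarrow> int" where
  "sv g = (\<lambda>(e,h,A). if 1 \<in> A then 2 * int g - 2 * int h - int e else - (2 * int h + int e - 2))"

definition addc :: "nat \<Rightarrow> nat \<Rightarrow> (vine \<Rightarrow> int) \<Rightarrow> (vine \<Rightarrow> int) \<Rightarrow> (vine \<Rightarrow> int)" where
  "addc g n c x = (\<lambda>v. if v \<in> Dgn g n then x v + c v else 0)"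

definition compat :: "nat \<Rightarrow> nat \<Rightarrow> (vine \<Rightarrow> int) \<Rightarrow> bool" where
  "compat g n c \<longleftrightarrow>
     (\<forall>e h A. (e,h,A) \<in> Dgn g n \<longrightarrow> c (e,h,A) + c (e, g + 1 - e - h, {1..n} - A) = 0) \<and>
     (\<forall>e h A e' h' A' e'' h'' A''.
        (e,h,A) \<in> Dgn g n \<and> (e',h',A') \<in> Dgn g n \<and> (e'',h'',A'') \<in> Dgn g n \<and>
        A = A' \<union> A'' \<and> A' \<inter> A'' = {} \<and>
        2 * (int h + 1 - int h' - int h'') = int e' + int e'' - int e \<longrightarrow>
        c (e,h,A) - c (e',h',A') - c (e'',h'',A'') = 0)"

definition lin :: "nat \<Rightarrow> nat \<Rightarrow> (nat \<Rightarrow> int) \<Rightarrow> int \<Rightarrow> vine \<Rightarrow> int" where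
  "lin g n a b = (\<lambda>v. (\<Sum>j\<in>{2..n}. a j * tj j v) + b * sv g v)"

lemma USC_D1:
  assumes "x \<in> USC g n d" "v \<notin> Dgn g n" shows "x v = 0"
proof -
  have "\<forall>v. v \<notin> Dgn g n \<longrightarrow> x v = 0" using assms(1) unfolding USC_def mem_Collect_eq
    by (elim conjE)
  then have "v \<notin> Dgn g n \<longrightarrow> x v = 0" by (rule spec)
  then show ?thesis using assms(2) by (rule mp)
qed

lemma USC_D2:
  assumes "x \<in> USC g n d" "(e,h,A) \<in> Dgn g n"
  shows "x (e,h,A) + x (e, g + 1 - e - h, {1..n} - A) = d + 1 - int e"
proof -
  have P: "\<forall>e h A. (e,h,A) \<in> Dgn g n \<longrightarrow>
        x (e,h,A) + x (e, g + 1 - e - h, {1..n} - A) = d + 1 - int e"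
    using assms(1) unfolding USC_def mem_Collect_eq by (elim conjE)
  show ?thesis by (rule P[rule_format, OF assms(2)])
qed

lemma USC_D3:
  assumes "x \<in> USC g n d" "(e,h,A) \<in> Dgn g n" "(e',h',A') \<in> Dgn g n"
   "(e'',h'',A'') \<in> Dgn g n" "A = A' \<union> A''" "A' \<inter> A'' = {}"
   "2 * (int h + 1 - int h' - int h'') = int e' + int e'' - int e"
   "e < e' + e''" "e' < e + e''" "e'' < e + e'"
  shows "0 \<le> (x (e,h,A) - int h) - (x (e',h',A') - int h') - (x (e'',h'',A'') - int h'') \<and>
   (x (e,h,A) - int h) - (x (e',h',A') - int h') - (x (e'',h'',A'') - int h'') \<le> 1"
proof -
  have P: "\<forall>e h A e' h' A' e'' h'' A''.
        (e,h,A) \<in> Dgn g n \<and> (e',h',A') \<in> Dgn g n \<and> (e'',h'',A'') \<in> Dgn g n \<and>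
        A = A' \<union> A'' \<and> A' \<inter> A'' = {} \<and>
        2 * (int h + 1 - int h' - int h'') = int e' + int e'' - int e \<and>
        e < e' + e'' \<and> e' < e + e'' \<and> e'' < e + e' \<longrightarrow>
        0 \<le> (x (e,h,A) - int h) - (x (e',h',A') - int h') - (x (e'',h'',A'') - int h'') \<and>
        (x (e,h,A) - int h) - (x (e',h',A') - int h') - (x (e'',h'',A'') - int h'') \<le> 1"
    using assms(1) unfolding USC_def mem_Collect_eq by (elim conjE)
  show ?thesis
    apply (rule P[rule_format])
    using assms(2-10) by (intro conjI)
qed

lemma USC_I:
  assumes "\<And>v. v \<notin> Dgn g n \<Longrightarrow> x v = 0"
    and "\<And>e h A. (e,h,A) \<in> Dgn g n \<Longrightarrow>
          x (e,h,A) + x (e, g + 1 - e - h, {1..n} - A) = d + 1 - int e"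
    and "\<And>e h A e' h' A' e'' h'' A''. (e,h,A) \<in> Dgn g n \<Longrightarrow> (e',h',A') \<in> Dgn g n \<Longrightarrow>
   (e'',h'',A'') \<in> Dgn g n \<Longrightarrow> A = A' \<union> A'' \<Longrightarrow> A' \<inter> A'' = {} \<Longrightarrow>
   2 * (int h + 1 - int h' - int h'') = int e' + int e'' - int e \<Longrightarrow>
   e < e' + e'' \<Longrightarrow> e' < e + e'' \<Longrightarrow> e'' < e + e' \<Longrightarrow>
   0 \<le> (x (e,h,A) - int h) - (x (e',h',A') - int h') - (x (e'',h'',A'') - int h'') \<and>
   (x (e,h,A) - int h) - (x (e',h',A') - int h') - (x (e'',h'',A'') - int h'') \<le> 1"
  shows "x \<in> USC g n d"
proof -
  have 1: "\<forall>v. v \<notin> Dgn g n \<longrightarrow> x v = 0" using assms(1) by blast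
  have 2: "\<forall>e h A. (e,h,A) \<in> Dgn g n \<longrightarrow>
        x (e,h,A) + x (e, g + 1 - e - h, {1..n} - A) = d + 1 - int e" using assms(2) by blast
  have 3: "\<forall>e h A e' h' A' e'' h'' A''.
        (e,h,A) \<in> Dgn g n \<and> (e',h',A') \<in> Dgn g n \<and> (e'',h'',A'') \<in> Dgn g n \<and>
        A = A' \<union> A'' \<and> A' \<inter> A'' = {} \<and>
        2 * (int h + 1 - int h' - int h'') = int e' + int e'' - int e \<and>
        e < e' + e'' \<and> e' < e + e'' \<and> e'' < e + e' \<longrightarrow>
        0 \<le> (x (e,h,A) - int h) - (x (e',h',A') - int h') - (x (e'',h'',A'') - int h'') \<and>
        (x (e,h,A) - int h) - (x (e',h',A') - int h') - (x (e'',h'',A'') - int h'') \<le> 1"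
    by (intro allI impI) (elim conjE, rule assms(3), assumption+)
  show ?thesis unfolding USC_def mem_Collect_eq by (rule conjI[OF 1 conjI[OF 2 3]])
qed

lemma Dgn_compl:
  assumes a: "(e,h,A) \<in> Dgn g n"
  shows "(e, g + 1 - e - h, {1..n} - A) \<in> Dgn g n"
proof -
  have P: "1 \<le> e \<and> e + h \<le> g + 1 \<and> A \<subseteq> {1..n} \<and>
      2 * int h - 2 + int e + int (card A) > 0 \<and>
      2 * (int g + 1 - int e - int h) - 2 + int e + int n - int (card A) > 0"
    using a unfolding Dgn_def mem_Collect_eq prod.case .
  then have e1: "1 \<le> e" and eh: "e + h \<le> g + 1" and A: "A \<subseteq> {1..n}"
    and s1: "2 * int h - 2 + int e + int (card A) > 0"
    and s2: "2 * (int g + 1 - int e - int h) - 2 + int e + int n - int (card A) > 0"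
    by blast+
  have fA: "finite A" by (rule finite_subset[OF A]) simp
  have card: "card ({1..n} - A) = n - card A" using card_Diff_subset[OF fA A] by simp
  have cA: "card A \<le> n" using card_mono[OF _ A] by simp
  have cB: "int (card ({1..n} - A)) = int n - int (card A)" using card cA by simp
  have h2: "int (g + 1 - e - h) = int g + 1 - int e - int h" using eh by linarith
  have B: "{1..n} - A \<subseteq> {1..n}" by blast
  have "1 \<le> e \<and> e + (g + 1 - e - h) \<le> g + 1 \<and> {1..n} - A \<subseteq> {1..n} \<and>
      2 * int (g + 1 - e - h) - 2 + int e + int (card ({1..n} - A)) > 0 \<and>
      2 * (int g + 1 - int e - int (g + 1 - e - h)) - 2 + int e + int n - int (card ({1..n} - A)) > 0"
  proof (intro conjI)
    show "1 \<le> e" by (rule e1)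
    show "e + (g + 1 - e - h) \<le> g + 1" using eh by linarith
    show "{1..n} - A \<subseteq> {1..n}" by (rule B)
    show "2 * int (g + 1 - e - h) - 2 + int e + int (card ({1..n} - A)) > 0"
      unfolding h2 cB using s2 by linarith
    show "2 * (int g + 1 - int e - int (g + 1 - e - h)) - 2 + int e + int n - int (card ({1..n} - A)) > 0"
      unfolding h2 cB using s1 by (simp add: algebra_simps)
  qed
  then show ?thesis unfolding Dgn_def mem_Collect_eq prod.case .
qed

lemma addc_USC:
  assumes c: "compat g n c" and x: "x \<in> USC g n d"
  shows "addc g n c x \<in> USC g n d"
proof (rule USC_I)
  fix v assume "v \<notin> Dgn g n" then show "addc g n c x v = 0" by (simp add: addc_def)
next
  fix e h A assume D: "(e,h,A) \<in> Dgn g n"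
  have "c (e,h,A) + c (e, g + 1 - e - h, {1..n} - A) = 0" using c D unfolding compat_def by blast
  then show "addc g n c x (e,h,A) + addc g n c x (e, g + 1 - e - h, {1..n} - A) = d + 1 - int e"
    using USC_D2[OF x D] D Dgn_compl[OF D] by (simp add: addc_def)
next
  fix e h A e' h' A' e'' h'' A''
  assume D: "(e,h,A) \<in> Dgn g n" "(e',h',A') \<in> Dgn g n" "(e'',h'',A'') \<in> Dgn g n"
    and u: "A = A' \<union> A''" "A' \<inter> A'' = {}"
    and hh: "2 * (int h + 1 - int h' - int h'') = int e' + int e'' - int e"
    and t: "e < e' + e''" "e' < e + e''" "e'' < e + e'"
  have "c (e,h,A) - c (e',h',A') - c (e'',h'',A'') = 0"
    using c D u hh unfolding compat_def by blast
  moreover note USC_D3[OF x D u hh t]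
  ultimately show "0 \<le> (addc g n c x (e,h,A) - int h) - (addc g n c x (e',h',A') - int h') - (addc g n c x (e'',h'',A'') - int h'') \<and>
   (addc g n c x (e,h,A) - int h) - (addc g n c x (e',h',A') - int h') - (addc g n c x (e'',h'',A'') - int h'') \<le> 1"
    using D by (simp add: addc_def)
qed

lemma compat_tj:
  assumes "j \<in> {1..n}" "n \<ge> 1"
  shows "compat g n (tj j)"
  unfolding compat_def tj_def using assms by auto

lemma compat_sv: assumes n1: "n \<ge> 1" shows "compat g n (sv g)"
  unfolding compat_def
proof (intro conjI allI impI)
  fix e h A assume D: "(e,h,A) \<in> Dgn g n"
  then have "e + h \<le> g + 1" by (auto simp: Dgn_def)
  then have "int (g + 1 - e - h) = int g + 1 - int e - int h" by (simp add: of_nat_diff)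
  then show "sv g (e,h,A) + sv g (e, g + 1 - e - h, {1..n} - A) = 0"
    using D n1 by (auto simp: sv_def Dgn_def)
next
  fix e h A e' h' A' e'' h'' A''
  assume "(e, h, A) \<in> Dgn g n \<and> (e', h', A') \<in> Dgn g n \<and> (e'', h'', A'') \<in> Dgn g n \<and>
       A = A' \<union> A'' \<and> A' \<inter> A'' = {} \<and> 2 * (int h + 1 - int h' - int h'') = int e' + int e'' - int e"
  then show "sv g (e, h, A) - sv g (e', h', A') - sv g (e'', h'', A'') = 0"
    by (auto simp: sv_def)
qed

lemma compat_neg:
  assumes c: "compat g n c" shows "compat g n (\<lambda>v. - c v)"
  unfolding compat_def
proof (intro conjI allI impI)
  fix e h A assume D: "(e,h,A) \<in> Dgn g n"
  have "c (e,h,A) + c (e, g + 1 - e - h, {1..n} - A) = 0" using c D unfolding compat_def by blast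
  then show "- c (e,h,A) + - c (e, g + 1 - e - h, {1..n} - A) = 0" by simp
next
  fix e h A e' h' A' e'' h'' A''
  assume P: "(e, h, A) \<in> Dgn g n \<and> (e', h', A') \<in> Dgn g n \<and> (e'', h'', A'') \<in> Dgn g n \<and>
       A = A' \<union> A'' \<and> A' \<inter> A'' = {} \<and> 2 * (int h + 1 - int h' - int h'') = int e' + int e'' - int e"
  have "c (e, h, A) - c (e', h', A') - c (e'', h'', A'') = 0" using c P unfolding compat_def by blast
  then show "- c (e, h, A) - - c (e', h', A') - - c (e'', h'', A'') = 0" by simp
qed


lemma Top_eq: "Top g n j = addc g n (tj j)"
proof (intro ext)
  fix m and v :: vine obtain e h A where v: "v = (e,h,A)" by (cases v) auto
  show "Top g n j m v = addc g n (tj j) m v" unfolding v by (simp add: Top_def addc_def tj_def)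
qed

lemma Sop_eq: "Sop g n = addc g n (sv g)"
proof (intro ext)
  fix m and v :: vine obtain e h A where v: "v = (e,h,A)" by (cases v) auto
  show "Sop g n m v = addc g n (sv g) m v" unfolding v by (simp add: Sop_def addc_def sv_def)
qed

lemma addc_addc: "addc g n c1 (addc g n c2 x) = addc g n (\<lambda>v. c2 v + c1 v) x"
  by (rule ext) (simp add: addc_def)

lemma addc_zero: "x \<in> USC g n d \<Longrightarrow> addc g n (\<lambda>v. 0) x = x"
  by (rule ext) (auto simp: addc_def USC_D1)

lemma addc_cong: assumes "\<And>v. c1 v = c2 v" shows "addc g n c1 x = addc g n c2 x"
proof -
  have "c1 = c2" using assms by (rule ext)
  then show ?thesis by simp
qed

lemma addc_bij:
  assumes c: "compat g n c"
  shows "bij_betw (addc g n c) (USC g n d) (USC g n d)"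
proof (rule bij_betw_byWitness[where f'="addc g n (\<lambda>v. - c v)"])
  show "\<forall>a\<in>USC g n d. addc g n (\<lambda>v. - c v) (addc g n c a) = a"
    by (auto simp: addc_addc addc_zero)
  show "\<forall>a\<in>USC g n d. addc g n c (addc g n (\<lambda>v. - c v) a) = a"
    by (auto simp: addc_addc addc_zero)
  show "addc g n c ` USC g n d \<subseteq> USC g n d" using addc_USC[OF c] by auto
  show "addc g n (\<lambda>v. - c v) ` USC g n d \<subseteq> USC g n d" using addc_USC[OF compat_neg[OF c]] by auto
qed

lemma addc_inv:
  assumes c: "compat g n c" and y: "y \<in> USC g n d"
  shows "inv_into (USC g n d) (addc g n c) y = addc g n (\<lambda>v. - c v) y"
proof (rule inv_into_f_eq)
  show "inj_on (addc g n c) (USC g n d)" using addc_bij[OF c] bij_betw_imp_inj_on by blast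
  show "addc g n (\<lambda>v. - c v) y \<in> USC g n d" using addc_USC[OF compat_neg[OF c] y] .
  show "addc g n c (addc g n (\<lambda>v. - c v) y) = y" using y by (simp add: addc_addc addc_zero)
qed

lemma gens_cases:
  assumes "f \<in> gens g n" "n \<ge> 1"
  obtains "f = addc g n (sv g)" | j where "j \<in> {2..n}" "f = addc g n (tj j)"
proof -
  from assms(1) have "f = Sop g n \<or> (\<exists>j. j \<in> {2..n} \<and> f = Top g n j)"
    unfolding gens_def by blast
  then show thesis
  proof (elim disjE exE conjE)
    assume "f = Sop g n" then show thesis unfolding Sop_eq by (rule that(1))
  next
    fix j assume "j \<in> {2..n}" "f = Top g n j"
    then show thesis using that(2) unfolding Top_eq by blast
  qed
qed

lemma gens_compat:
  assumes "f \<in> gens g n" "n \<ge> 1"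
  shows "\<exists>c. f = addc g n c \<and> compat g n c"
proof (rule gens_cases[OF assms])
  assume "f = addc g n (sv g)" then show ?thesis using compat_sv[OF assms(2)] by blast
next
  fix j assume "j \<in> {2..n}" "f = addc g n (tj j)"
  then show ?thesis using compat_tj[of j n g] assms(2) by auto
qed

lemma lin_add_tj:
  assumes "j \<in> {2..n}"
  shows "lin g n a b v + k * tj j v = lin g n (\<lambda>i. a i + (if i = j then k else 0)) b v"
proof -
  have "(\<Sum>i\<in>{2..n}. (a i + (if i = j then k else 0)) * tj i v)
      = (\<Sum>i\<in>{2..n}. a i * tj i v + (if i = j then k * tj i v else 0))"
    by (rule sum.cong) (auto simp: algebra_simps)
  also have "\<dots> = (\<Sum>i\<in>{2..n}. a i * tj i v) + k * tj j v"
    using assms by (simp add: sum.distrib)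
  finally show ?thesis unfolding lin_def by simp
qed

lemma lin_add_sv: "lin g n a b v + k * sv g v = lin g n a (b + k) v"
  unfolding lin_def by (simp add: algebra_simps)

lemma orbit_char:
  assumes m: "m \<in> USC g n d" and n1: "n \<ge> 1"
  shows "x \<in> orbit g n d m \<Longrightarrow> x \<in> USC g n d \<and> (\<exists>a b. x = addc g n (lin g n a b) m)"
proof (induction rule: orbit.induct)
  case base
  have "lin g n (\<lambda>_. 0) 0 = (\<lambda>v. 0)" by (rule ext) (simp add: lin_def)
  then have "m = addc g n (lin g n (\<lambda>_. 0) 0) m" using addc_zero[OF m] by simp
  then show ?case using m by blast
next
  case (fwd x f)
  then obtain a b where x: "x \<in> USC g n d" "x = addc g n (lin g n a b) m" by blast
  from fwd(2) n1 show ?case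
  proof (cases rule: gens_cases)
    case 1
    have "f x = addc g n (lin g n a (b + 1)) m"
      unfolding 1 x(2) addc_addc by (rule addc_cong) (use lin_add_sv[of g n a b _ 1] in simp)
    moreover have "f x \<in> USC g n d" unfolding 1 by (rule addc_USC[OF compat_sv[OF n1] x(1)])
    ultimately show ?thesis by blast
  next
    case (2 j)
    have "f x = addc g n (lin g n (\<lambda>i. a i + (if i = j then 1 else 0)) b) m"
      unfolding 2 x(2) addc_addc by (rule addc_cong) (use lin_add_tj[OF 2(1), of g a b _ 1] in simp)
    moreover have cj: "compat g n (tj j)" using 2 compat_tj[of j n g] by auto
    moreover have "f x \<in> USC g n d" unfolding 2 by (rule addc_USC[OF cj x(1)])
    ultimately show ?thesis by blast
  qed
next
  case (bwd x f)
  then obtain a b where x: "x \<in> USC g n d" "x = addc g n (lin g n a b) m" by blast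
  from bwd(2) n1 show ?case
  proof (cases rule: gens_cases)
    case 1
    have "inv_into (USC g n d) f x = addc g n (lin g n a (b + -1)) m"
      unfolding 1 addc_inv[OF compat_sv[OF n1] x(1)] unfolding x(2) addc_addc
      by (rule addc_cong) (use lin_add_sv[of g n a b _ "-1"] in simp)
    moreover have "inv_into (USC g n d) f x \<in> USC g n d"
      unfolding 1 addc_inv[OF compat_sv[OF n1] x(1)]
      by (rule addc_USC[OF compat_neg[OF compat_sv[OF n1]] x(1)])
    ultimately show ?thesis by blast
  next
    case (2 j)
    have cj: "compat g n (tj j)" using 2 compat_tj[of j n g] by auto
    have "inv_into (USC g n d) f x = addc g n (lin g n (\<lambda>i. a i + (if i = j then -1 else 0)) b) m"
      unfolding 2 addc_inv[OF cj x(1)] unfolding x(2) addc_addc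
      by (rule addc_cong) (use lin_add_tj[OF 2(1), of g a b _ "-1"] in simp)
    moreover have "inv_into (USC g n d) f x \<in> USC g n d"
      unfolding 2 addc_inv[OF cj x(1)] by (rule addc_USC[OF compat_neg[OF cj] x(1)])
    ultimately show ?thesis by blast
  qed
qed


lemma Sop_gens: "addc g n (sv g) \<in> gens g n"
  unfolding gens_def Sop_eq by simp

lemma Top_gens: "j \<in> {2..n} \<Longrightarrow> addc g n (tj j) \<in> gens g n"
  unfolding gens_def Top_eq by blast

lemma orbit_pow:
  assumes m: "m \<in> USC g n d" and n1: "n \<ge> 1" and x: "x \<in> orbit g n d m"
    and gen: "addc g n c \<in> gens g n" and cc: "compat g n c"
  shows "addc g n (\<lambda>v. k * c v) x \<in> orbit g n d m"
proof -
  have nat: "addc g n (\<lambda>v. int k * c v) x \<in> orbit g n d m \<and>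
             addc g n (\<lambda>v. - int k * c v) x \<in> orbit g n d m" for k :: nat
  proof (induction k)
    case 0
    have "x \<in> USC g n d" by (rule conjunct1[OF orbit_char[OF m n1 x]])
    then show ?case using x addc_zero[of x] by simp
  next
    case (Suc k)
    have y1: "addc g n (\<lambda>v. int k * c v) x \<in> orbit g n d m" by (rule conjunct1[OF Suc.IH])
    have y2: "addc g n (\<lambda>v. - int k * c v) x \<in> orbit g n d m" by (rule conjunct2[OF Suc.IH])
    have u2: "addc g n (\<lambda>v. - int k * c v) x \<in> USC g n d" by (rule conjunct1[OF orbit_char[OF m n1 y2]])
    have "addc g n (\<lambda>v. int (Suc k) * c v) x = addc g n c (addc g n (\<lambda>v. int k * c v) x)"
      unfolding addc_addc by (rule addc_cong) (simp add: algebra_simps)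
    moreover have "addc g n (\<lambda>v. - int (Suc k) * c v) x
        = inv_into (USC g n d) (addc g n c) (addc g n (\<lambda>v. - int k * c v) x)"
      unfolding addc_inv[OF cc u2] addc_addc by (rule addc_cong) (simp add: algebra_simps)
    ultimately show ?case using orbit.fwd[OF y1 gen] orbit.bwd[OF y2 gen] by (simp only:)
  qed
  show ?thesis
  proof (cases "k \<ge> 0")
    case True
    then have eq: "int (nat k) = k" by simp
    show ?thesis by (rule conjunct1[OF nat[of "nat k", unfolded eq]])
  next
    case False
    then have eq: "- int (nat (- k)) = k" by simp
    show ?thesis by (rule conjunct2[OF nat[of "nat (- k)", unfolded eq]])
  qed
qed

lemma orbit_sum:
  assumes m: "m \<in> USC g n d" and n1: "n \<ge> 1"
  shows "finite F \<Longrightarrow> F \<subseteq> {2..n} \<Longrightarrow> x \<in> orbit g n d m \<Longrightarrow>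
    addc g n (\<lambda>v. \<Sum>j\<in>F. a j * tj j v) x \<in> orbit g n d m"
proof (induction F rule: finite_induct)
  case empty
  have "x \<in> USC g n d" using orbit_char[OF m n1 empty(2)] by blast
  then show ?case using empty addc_zero by simp
next
  case (insert j F)
  then have y: "addc g n (\<lambda>v. \<Sum>j\<in>F. a j * tj j v) x \<in> orbit g n d m" by auto
  have j: "j \<in> {2..n}" using insert by auto
  have cj: "compat g n (tj j)" using j compat_tj[of j n g] by auto
  have "addc g n (\<lambda>v. \<Sum>j\<in>insert j F. a j * tj j v) x
      = addc g n (\<lambda>v. a j * tj j v) (addc g n (\<lambda>v. \<Sum>j\<in>F. a j * tj j v) x)"
    unfolding addc_addc by (rule addc_cong) (simp add: insert algebra_simps)
  then show ?case using orbit_pow[OF m n1 y Top_gens[OF j] cj] by simp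
qed

lemma orbit_lin:
  assumes m: "m \<in> USC g n d" and n1: "n \<ge> 1"
  shows "addc g n (lin g n a b) m \<in> orbit g n d m"
proof -
  have y: "addc g n (\<lambda>v. \<Sum>j\<in>{2..n}. a j * tj j v) m \<in> orbit g n d m"
    using orbit_sum[OF m n1, of "{2..n}" m a] orbit.base by auto
  have "addc g n (lin g n a b) m = addc g n (\<lambda>v. b * sv g v) (addc g n (\<lambda>v. \<Sum>j\<in>{2..n}. a j * tj j v) m)"
    unfolding addc_addc lin_def by (rule addc_cong) simp
  then show ?thesis using orbit_pow[OF m n1 y Sop_gens compat_sv[OF n1]] by simp
qed

lemma D2: "i \<in> {1..n} \<Longrightarrow> g \<ge> 2 \<Longrightarrow> (2, 0, {i}) \<in> Dgn g n"
  by (auto simp: Dgn_def)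

lemma lin_at1: "lin g n a b (2, 0, {1}) = (\<Sum>j\<in>{2..n}. a j) + b * (2 * int g - 2)"
proof -
  have "(\<Sum>j\<in>{2..n}. a j * tj j (2, 0, {1})) = (\<Sum>j\<in>{2..n}. a j)"
    by (rule sum.cong) (auto simp: tj_def)
  then show ?thesis by (simp add: lin_def sv_def)
qed

lemma lin_ati: assumes "i \<in> {2..n}" shows "lin g n a b (2, 0, {i}) = - a i"
proof -
  have "(\<Sum>j\<in>{2..n}. a j * tj j (2, 0, {i})) = (\<Sum>j\<in>{2..n}. if j = i then - a j else 0)"
    by (rule sum.cong) (use assms in \<open>auto simp: tj_def\<close>)
  also have "\<dots> = - a i" using assms by (simp add: sum.delta)
  finally show ?thesis using assms by (simp add: lin_def sv_def)
qed


lemma uniq_b: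
  fixes K t b b' :: int
  assumes K: "K > 0" and h: "0 \<le> t + b*K" "t + b*K < K" "0 \<le> t + b'*K" "t + b'*K < K"
  shows "b = b'"
proof (rule ccontr)
  assume "b \<noteq> b'"
  then consider "b + 1 \<le> b'" | "b' + 1 \<le> b" by linarith
  then show False
  proof cases
    case 1
    have "(b+1)*K \<le> b'*K" using 1 K by (intro mult_right_mono) auto
    then have "b*K + K \<le> b'*K" by (simp add: distrib_right)
    then show False using h by linarith
  next
    case 2
    have "(b'+1)*K \<le> b*K" using 2 K by (intro mult_right_mono) auto
    then have "b'*K + K \<le> b*K" by (simp add: distrib_right)
    then show False using h by linarith
  qed
qed

lemma addc_at: "v \<in> Dgn g n \<Longrightarrow> addc g n c x v = x v + c v"
  by (simp add: addc_def)

theorem mainTheorem8: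
  fixes g n :: nat and d :: int
  assumes "g \<ge> 2" and "n \<ge> 1"
  shows "(\<forall>f \<in> gens g n. bij_betw f (USC g n d) (USC g n d)) \<and>
         (\<forall>m \<in> USC g n d. \<exists>!m'. m' \<in> orbit g n d m \<and> normalized g n m')"
proof (intro conjI ballI)
  note g2 = assms(1) and n1 = assms(2)
  fix f assume "f \<in> gens g n"
  then obtain c where "f = addc g n c" "compat g n c" using gens_compat n1 by blast
  then show "bij_betw f (USC g n d) (USC g n d)" using addc_bij by blast
next
  note g2 = assms(1) and n1 = assms(2)
  fix m assume m: "m \<in> USC g n d"
  define a where "a i = m (2, 0, {i})" for i
  define K where "K = 2 * int g - 2"
  have K: "K > 0" using g2 unfolding K_def by simp
  define t where "t = m (2, 0, {1}) + (\<Sum>j\<in>{2..n}. a j)"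
  define b where "b = - (t div K)"
  define m0 where "m0 = addc g n (lin g n a b) m"
  have D1: "(2, 0, {1}) \<in> Dgn g n" using D2[of 1 n g] g2 n1 by simp
  have Di: "(2, 0, {i}) \<in> Dgn g n" if "i \<in> {2..n}" for i using D2[of i n g] g2 that by simp
  have val1: "addc g n (lin g n a' b') m (2, 0, {1}) = m (2, 0, {1}) + (\<Sum>j\<in>{2..n}. a' j) + b' * K" for a' b'
    using addc_at[OF D1] lin_at1 unfolding K_def by simp
  have vali: "addc g n (lin g n a' b') m (2, 0, {i}) = m (2, 0, {i}) - a' i" if "i \<in> {2..n}" for a' b' i
    using addc_at[OF Di[OF that]] lin_ati[OF that] by simp
  have t0: "t + b * K = t mod K" unfolding b_def by (simp add: minus_div_mult_eq_mod[symmetric] algebra_simps)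
  have norm0: "normalized g n m0"
    unfolding normalized_def m0_def
  proof (intro conjI ballI)
    have "addc g n (lin g n a b) m (2, 0, {1}) = t mod K" using val1 t0 unfolding t_def by simp
    moreover have "0 \<le> t mod K" "t mod K < K" using K by auto
    ultimately show "addc g n (lin g n a b) m (2, 0, {1}) \<in> {0..2 * int g - 3}" unfolding K_def by auto
  next
    fix i assume "i \<in> {2..n}"
    then show "addc g n (lin g n a b) m (2, 0, {i}) = 0" using vali a_def by simp
  qed
  show "\<exists>!m'. m' \<in> orbit g n d m \<and> normalized g n m'"
  proof (rule ex1I[of _ m0])
    show "m0 \<in> orbit g n d m \<and> normalized g n m0" using orbit_lin[OF m n1] norm0 m0_def by simp
  next
    fix y assume y: "y \<in> orbit g n d m \<and> normalized g n y"
    then obtain a' b' where yeq: "y = addc g n (lin g n a' b') m" using orbit_char[OF m n1] by blast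
    have aa: "a' i = a i" if "i \<in> {2..n}" for i
      using y vali[OF that, of a' b'] that unfolding normalized_def yeq a_def by auto
    have sa: "(\<Sum>j\<in>{2..n}. a' j) = (\<Sum>j\<in>{2..n}. a j)" using aa by (rule sum.cong[OF refl])
    have "y (2, 0, {1}) = t + b' * K" using val1[of a' b'] sa unfolding yeq t_def by simp
    moreover have "y (2, 0, {1}) \<in> {0..2 * int g - 3}" using y unfolding normalized_def by blast
    ultimately have h1: "0 \<le> t + b' * K" "t + b' * K < K" unfolding K_def by auto
    have m1: "0 \<le> t mod K" "t mod K < K" using K by auto
    have "b = b'" by (rule uniq_b[OF K _ _ h1]) (use m1 t0 in simp_all)
    then have bb: "b' = b" by simp
    have "lin g n a' b' v = lin g n a b v" for v
    proof -
      have "(\<Sum>j\<in>{2..n}. a' j * tj j v) = (\<Sum>j\<in>{2..n}. a j * tj j v)"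
        by (rule sum.cong) (simp_all add: aa)
      then show ?thesis by (simp add: lin_def bb)
    qed
    then have "lin g n a' b' = lin g n a b" by (rule ext)
    then show "y = m0" unfolding yeq m0_def by simp
  qed
qed

end
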